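(* Let $X\subseteq\{0,1\}^{\mathbb Z}$ be a subshift and let $a_{-n+1}a_{-n+2}\dots a_{-1}a_0$ ($n\ge2$) be a block of length $n$ in $\mathcal L(\tilde X)$. If $a_{-n+1}a_{-n+2}\dots a_0$ is significant, then both $0a_{-n+2}\dots a_{-1}a_0$ and $1a_{-n+2}\dots a_{-1}a_0$ are in $\mathcal L(\tilde X)$.
   Context: $\sigma$ is the shift $(\sigma x)_i=x_{i+1}$; a subshift is a nonempty closed $\sigma$-invariant set. $X^+$ denotes the set of right rays $x_0x_1\dots$ of points $x\in X$, and $\tilde X=\{x\in\{0,1\}^{\mathbb Z}: x_px_{p+1}\dots\in X^+\ \forall p\in\mathbb Z\}$ (which equals $X$). $\mathcal L(\tilde X)$ is the set of finite blocks occurring in points of $\tilde X$. For $a_{-n}\dots a_0\in\mathcal L(\tilde X)$, $\mathrm{fol}(a_{-n}\dots a_0)=\{b_0b_1\dots\in X^+:\exists b\in\tilde X,\ b_{-n}\dots b_0=a_{-n}\dots a_0\}$. A block $a_{-n}\dots a_0$ with $n\ge1$ is significant if $\mathrm{fol}(a_{-n}\dots a_0)\subsetneq\mathrm{fol}(a_{-n+1}\dots a_0)$. *)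

theory Defs
  imports "HOL-Analysis.Analysis"
begin

text \<open>Points of the full shift {0,1}^Z are functions int => nat with values in {0,1};
  the topology is the product topology (Function_Topology) over the discrete space nat.\<close>

definition full_shift :: "(int \<Rightarrow> nat) set" where
  "full_shift = {x. \<forall>i. x i \<in> {0,1}}"

definition shift :: "(int \<Rightarrow> nat) \<Rightarrow> (int \<Rightarrow> nat)" where
  "shift x = (\<lambda>i. x (i + 1))"

definition subshift :: "(int \<Rightarrow> nat) set \<Rightarrow> bool" where
  "subshift X \<longleftrightarrow> X \<subseteq> full_shift \<and> X \<noteq> {} \<and> closed X \<and> shift ` X = X"

definition ray :: "(int \<Rightarrow> nat) \<Rightarrow> int \<Rightarrow> (nat \<Rightarrow> nat)" where
  "ray x p = (\<lambda>k. x (p + int k))"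

definition rays :: "(int \<Rightarrow> nat) set \<Rightarrow> (nat \<Rightarrow> nat) set" where
  "rays X = {ray x 0 | x. x \<in> X}"

definition tilde :: "(int \<Rightarrow> nat) set \<Rightarrow> (int \<Rightarrow> nat) set" where
  "tilde X = {x \<in> full_shift. \<forall>p. ray x p \<in> rays X}"

definition occurs_at :: "nat list \<Rightarrow> (int \<Rightarrow> nat) \<Rightarrow> int \<Rightarrow> bool" where
  "occurs_at w x p \<longleftrightarrow> (\<forall>i < length w. x (p + int i) = w ! i)"

definition lang :: "(int \<Rightarrow> nat) set \<Rightarrow> nat list set" where
  "lang Y = {w. \<exists>x\<in>Y. \<exists>p. occurs_at w x p}"

text \<open>fol(a_{-n}...a_0): the list w = [a_{-n},...,a_0] is placed so that its last symbol
  sits at coordinate 0, i.e. it starts at coordinate 1 - length w.\<close>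
definition fol :: "(int \<Rightarrow> nat) set \<Rightarrow> nat list \<Rightarrow> (nat \<Rightarrow> nat) set" where
  "fol X w = {r \<in> rays X. \<exists>b \<in> tilde X. occurs_at w b (1 - int (length w)) \<and> r = ray b 0}"

definition significant :: "(int \<Rightarrow> nat) set \<Rightarrow> nat list \<Rightarrow> bool" where
  "significant X w \<longleftrightarrow> length w \<ge> 2 \<and> fol X w \<subset> fol X (tl w)"

end

theory Submission
  imports Defs
begin

theorem proposition4p6:
  fixes X :: "(int \<Rightarrow> nat) set" and a :: "nat list" and n :: nat
  assumes "subshift X"
    and "n \<ge> 2"
    and "length a = n"
    and "a \<in> lang (tilde X)"
    and "significant X a"
  shows "(0 # tl a) \<in> lang (tilde X) \<and> (1 # tl a) \<in> lang (tilde X)"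
proof -
  have ne: "a \<noteq> []" using assms(2,3) by auto
  have aeq: "a = hd a # tl a" using ne by simp
  obtain r where r1: "r \<in> fol X (tl a)" and r2: "r \<notin> fol X a"
    using assms(5) unfolding significant_def by blast
  from r1 obtain b where rr: "r \<in> rays X" and b: "b \<in> tilde X"
    and occ: "occurs_at (tl a) b (1 - int (length (tl a)))" and rb: "r = ray b 0"
    unfolding fol_def by blast
  define c where "c = b (1 - int n)"
  have c01: "c \<in> {0,1}" using b unfolding tilde_def full_shift_def c_def by blast
  have occ2: "occurs_at (c # tl a) b (1 - int n)"
    unfolding occurs_at_def
  proof (intro allI impI)
    fix i assume "i < length (c # tl a)"
    show "b (1 - int n + int i) = (c # tl a) ! i"
    proof (cases i)
      case 0 then show ?thesis by (simp add: c_def)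
    next
      case (Suc j)
      have "j < length (tl a)" using \<open>i < length (c # tl a)\<close> Suc by simp
      then have "b (1 - int (length (tl a)) + int j) = tl a ! j"
        using occ unfolding occurs_at_def by blast
      moreover have "1 - int (length (tl a)) + int j = 1 - int n + int i"
        using Suc assms(2,3) by simp
      ultimately show ?thesis using Suc by (metis nth_Cons_Suc)
    qed
  qed
  have lc: "length (c # tl a) = length a" using ne by simp
  have "c \<noteq> hd a"
  proof
    assume "c = hd a"
    then have "occurs_at a b (1 - int (length a))" using occ2 aeq assms(3) by metis
    then have "r \<in> fol X a" using rr b rb unfolding fol_def by blast
    then show False using r2 by blast
  qed
  from assms(4) obtain x p where x: "x \<in> tilde X" and ox: "occurs_at a x p"
    unfolding lang_def by blast
  have "x p = hd a" using ox ne unfolding occurs_at_def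
    by (metis add.right_neutral hd_conv_nth length_greater_0_conv of_nat_0)
  then have h01: "hd a \<in> {0,1}" using x unfolding tilde_def full_shift_def by (metis (mono_tags, lifting) mem_Collect_eq)
  have L1: "c # tl a \<in> lang (tilde X)" using b occ2 unfolding lang_def by blast
  have L2: "hd a # tl a \<in> lang (tilde X)" using assms(4) aeq by simp
  show ?thesis using L1 L2 c01 h01 \<open>c \<noteq> hd a\<close> by auto
qed

end
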